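(* Let $A\in\mathbb R^{(m-1)\times n}$, $b\in\mathbb R^{m-1}$, $c\in\mathbb R^n$, $d\in\mathbb R$, and let $\mathcal S=\{x\in\mathbb R^n:\|Ax-b\|_2\le c^Tx-d\}$. Assume $\mathcal S\neq\emptyset$, $A^TA-cc^T$ is positive semidefinite, and $\begin{bmatrix}b\\ d\end{bmatrix}$ is not in the image (column space) of $\begin{bmatrix}A\\ c^T\end{bmatrix}$. Then $$\mathcal S=\{x\in\mathbb R^n: x^T(A^TA-cc^T)x-2(A^Tb-cd)^Tx+b^Tb-d^2\le0\}.$$ *)

theory Defs
  imports "HOL-Analysis.Analysis"
begin

definition outer :: "real ^ 'n \<Rightarrow> real ^ 'n \<Rightarrow> real ^ 'n ^ 'n" where
  "outer u v = (\<chi> i j. u $ i * v $ j)"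

definition psd :: "real ^ 'n ^ 'n \<Rightarrow> bool" where
  "psd M \<longleftrightarrow> transpose M = M \<and> (\<forall>x. 0 \<le> x \<bullet> (M *v x))"

end

theory Submission
  imports Defs
begin

lemma quad: fixes A :: "real ^ 'n ^ 'm" and c x :: "real ^ 'n"
  shows "x \<bullet> ((transpose A ** A - outer c c) *v x) = (A *v x) \<bullet> (A *v x) - (c \<bullet> x)^2"
proof -
  have 1: "outer c c *v x = (c \<bullet> x) *\<^sub>R c"
    by (simp add: vec_eq_iff outer_def matrix_vector_mult_def inner_vec_def sum_distrib_left mult_ac)
  have 2: "x \<bullet> (transpose A *v (A *v x)) = (A *v x) \<bullet> (A *v x)"
    by (metis dot_lmul_matrix vector_transpose_matrix inner_commute)
  show ?thesis
    unfolding matrix_vector_mult_diff_rdistrib matrix_vector_mul_assoc[symmetric] inner_diff_right 1 2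
    by (simp add: power2_eq_square inner_commute)
qed

lemma lin: fixes A :: "real ^ 'n ^ 'm" and x :: "real ^ 'n"
  shows "(transpose A *v b) \<bullet> x = b \<bullet> (A *v x)"
  by (metis dot_lmul_matrix vector_transpose_matrix inner_commute)

lemma Qform: fixes A :: "real ^ 'n ^ 'm" and b :: "real ^ 'm" and c x :: "real ^ 'n"
  shows "x \<bullet> ((transpose A ** A - outer c c) *v x)
                 - 2 * ((transpose A *v b - d *\<^sub>R c) \<bullet> x) + b \<bullet> b - d\<^sup>2
     = (A *v x - b) \<bullet> (A *v x - b) - (c \<bullet> x - d)^2"
  unfolding quad inner_diff_left lin inner_scaleR_left
  by (simp add: inner_diff_right power2_eq_square inner_commute algebra_simps)

lemma seg:
  fixes u v :: "'a::real_inner" and t :: real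
  shows "((1-t) *\<^sub>R u + t *\<^sub>R v) \<bullet> ((1-t) *\<^sub>R u + t *\<^sub>R v)
     = (1-t) * (u \<bullet> u) + t * (v \<bullet> v) - t*(1-t) * ((u - v) \<bullet> (u - v))"
  by (simp add: inner_add_left inner_add_right inner_diff_left inner_diff_right inner_commute algebra_simps)

theorem lemma5p2:
  fixes A :: "real ^ 'n ^ 'm" and b :: "real ^ 'm" and c :: "real ^ 'n" and d :: real
  defines "S \<equiv> {x :: real ^ 'n. norm (A *v x - b) \<le> c \<bullet> x - d}"
  assumes "S \<noteq> {}"
    and "psd (transpose A ** A - outer c c)"
    and "\<not> (\<exists>x. A *v x = b \<and> c \<bullet> x = d)"
  shows "S = {x. x \<bullet> ((transpose A ** A - outer c c) *v x)
                 - 2 * ((transpose A *v b - d *\<^sub>R c) \<bullet> x) + b \<bullet> b - d\<^sup>2 \<le> 0}"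
proof -
  define Q where "Q x = (A *v x - b) \<bullet> (A *v x - b) - (c \<bullet> x - d)^2" for x
  have nsq: "norm (A *v x - b) ^ 2 = (A *v x - b) \<bullet> (A *v x - b)" for x
    by (simp add: power2_norm_eq_inner)
  have psdq: "0 \<le> (A *v h) \<bullet> (A *v h) - (c \<bullet> h)^2" for h
    using assms(3) unfolding psd_def by (metis quad)
  obtain y where y: "y \<in> S" using assms(2) by blast
  have Qy: "Q y \<le> 0" using y unfolding S_def Q_def
    by (auto simp flip: nsq intro!: power_mono)
  have Qy2: "c \<bullet> y - d \<ge> 0" proof -
    have "norm (A *v y - b) \<le> c \<bullet> y - d" using y unfolding S_def by simp
    then show ?thesis using norm_ge_zero[of "A *v y - b"] by linarith
  qed
  have "S = {x. Q x \<le> 0}"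
  proof (intro set_eqI iffI)
    fix x assume "x \<in> S"
    then show "x \<in> {x. Q x \<le> 0}" unfolding S_def Q_def
      by (auto simp flip: nsq intro!: power_mono)
  next
    fix x assume "x \<in> {x. Q x \<le> 0}"
    hence Qx: "Q x \<le> 0" by simp
    show "x \<in> S"
    proof (cases "c \<bullet> x - d \<ge> 0")
      case True
      have "norm (A *v x - b) ^ 2 \<le> (c \<bullet> x - d)^2" using Qx unfolding Q_def nsq by simp
      then show ?thesis using True unfolding S_def by (simp add: power2_le_iff_abs_le)
    next
      case False
      define \<alpha> where "\<alpha> = c \<bullet> x - d"
      define \<beta> where "\<beta> = c \<bullet> y - d"
      define t where "t = \<alpha> / (\<alpha> - \<beta>)"
      have a0: "\<alpha> < 0" using False \<alpha>_def by simp
      have b0: "\<beta> \<ge> 0" using Qy2 \<beta>_def by simp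
      have t0: "0 \<le> t" "t \<le> 1" using a0 b0 unfolding t_def by (auto simp: field_simps)
      define z where "z = (1-t) *\<^sub>R x + t *\<^sub>R y"
      have cz: "c \<bullet> z - d = (1-t) * \<alpha> + t * \<beta>"
        unfolding z_def \<alpha>_def \<beta>_def by (simp add: inner_add_right algebra_simps)
      have cz0: "(1-t) * \<alpha> + t * \<beta> = 0"
        using a0 b0 unfolding t_def by (auto simp: field_simps)
      have Az: "A *v z - b = (1-t) *\<^sub>R (A *v x - b) + t *\<^sub>R (A *v y - b)"
        unfolding z_def by (simp add: matrix_vector_right_distrib matrix_vector_mult_scaleR algebra_simps)
      have diff: "(A *v x - b) - (A *v y - b) = A *v (x - y)"
        by (simp add: matrix_vector_mult_diff_distrib)
      have sq: "((1-t) * \<alpha> + t * \<beta>)^2 = (1-t)*\<alpha>^2 + t*\<beta>^2 - t*(1-t)*(\<alpha>-\<beta>)^2"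
        by (simp add: power2_eq_square algebra_simps)
      have ab: "\<alpha> - \<beta> = c \<bullet> (x - y)" unfolding \<alpha>_def \<beta>_def by (simp add: inner_diff_right)
      have "(A *v z - b) \<bullet> (A *v z - b)
          = (1-t) * Q x + t * Q y - t*(1-t) * ((A *v (x-y)) \<bullet> (A *v (x-y)) - (c \<bullet> (x-y))^2)"
        unfolding Az seg diff Q_def using cz0 sq ab unfolding \<alpha>_def \<beta>_def
        by (simp add: algebra_simps)
      also have "\<dots> \<le> 0"
        using Qx Qy t0 psdq[of "x-y"]
        by (smt (verit) mult_nonneg_nonneg mult_nonneg_nonpos)
      finally have "(A *v z - b) \<bullet> (A *v z - b) \<le> 0" .
      hence "(A *v z - b) \<bullet> (A *v z - b) = 0" using inner_ge_zero[of "A *v z - b"] by linarith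
      hence "A *v z = b" by simp
      moreover have "c \<bullet> z = d" using cz cz0 by simp
      ultimately show ?thesis using assms(4) by blast
    qed
  qed
  then show ?thesis unfolding Qform Q_def by simp
qed

end
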